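(* Let $(U,d)$ be an asymmetric pseudometric space, $k\ge 2$, $R^*>0$ the optimal AMMD value, $R'=\min\{d(u,v): d(u,v)\ge R^*/3,\ u,v\in U,\ u\ne v\}$, $R>0$, and let $U'$ be the output of Cluster$(U,d,R)$. Then $d_{\max}(u,v)\ge R$ for all distinct $u,v\in U'$. Additionally, if $R\le R'$, then $U'$ contains a set $S$ with $|S|=k$ and $\operatorname{div}(S)\ge R'\ge R^*/3$.
   Context: An asymmetric pseudometric space $(U,d)$ is a finite set $U$ with $d:U\times U\to\mathbb{R}_{\ge 0}$ such that $d(u,u)=0$ and $d(u,v)\le d(u,w)+d(w,v)$ for all $u,v,w\in U$ ($d$ need not be symmetric). For $S\subseteq U$, $\operatorname{div}(S)=\min_{u,v\in S,\,u\ne v} d(u,v)$; $R^*$ is the maximum of $\operatorname{div}(O)$ over $O\subseteq U$ with $|O|=k$ (with $k\le |U|$). $d_{\max}(u,v)=\max\{d(u,v),d(v,u)\}$. Cluster$(U,d,R)$: initially all points are unmarked; while an unmarked point exists, choose any unmarked point $c$, let $A=\{v\in U\text{ unmarked}: d_{\max}(c,v)<R\}$, mark all points of $A$, and add $c$ to the output set $U'$. It returns $U'$. *)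

theory Defs
  imports Complex_Main
begin

definition asym_pseudometric :: "'a set \<Rightarrow> ('a \<Rightarrow> 'a \<Rightarrow> real) \<Rightarrow> bool" where
  "asym_pseudometric U d \<longleftrightarrow> finite U \<and>
     (\<forall>u\<in>U. \<forall>v\<in>U. d u v \<ge> 0) \<and>
     (\<forall>u\<in>U. d u u = 0) \<and>
     (\<forall>u\<in>U. \<forall>v\<in>U. \<forall>w\<in>U. d u v \<le> d u w + d w v)"

definition dmax :: "('a \<Rightarrow> 'a \<Rightarrow> real) \<Rightarrow> 'a \<Rightarrow> 'a \<Rightarrow> real" where
  "dmax d u v = max (d u v) (d v u)"

definition divers :: "('a \<Rightarrow> 'a \<Rightarrow> real) \<Rightarrow> 'a set \<Rightarrow> real" where
  "divers d S = Min {d u v | u v. u \<in> S \<and> v \<in> S \<and> u \<noteq> v}"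

definition opt_div :: "'a set \<Rightarrow> ('a \<Rightarrow> 'a \<Rightarrow> real) \<Rightarrow> nat \<Rightarrow> real" where
  "opt_div U d k = Max {divers d T | T. T \<subseteq> U \<and> card T = k}"

definition R_prime :: "'a set \<Rightarrow> ('a \<Rightarrow> 'a \<Rightarrow> real) \<Rightarrow> nat \<Rightarrow> real" where
  "R_prime U d k = Min {d u v | u v. u \<in> U \<and> v \<in> U \<and> u \<noteq> v \<and> d u v \<ge> opt_div U d k / 3}"

text \<open>One iteration of Cluster(U,d,R): the state is (marked points, output set);
  an unmarked point c is chosen, all unmarked v with dmax(c,v) < R get marked, c is output.\<close>
inductive cluster_step :: "'a set \<Rightarrow> ('a \<Rightarrow> 'a \<Rightarrow> real) \<Rightarrow> real \<Rightarrow>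
    'a set \<times> 'a set \<Rightarrow> 'a set \<times> 'a set \<Rightarrow> bool" for U d R where
  "c \<in> U \<Longrightarrow> c \<notin> M \<Longrightarrow>
   cluster_step U d R (M, S) (M \<union> {v \<in> U. v \<notin> M \<and> dmax d c v < R}, insert c S)"

text \<open>U' is a possible output of Cluster(U,d,R) (for some sequence of choices):
  starting with nothing marked, run steps until every point is marked.\<close>
definition cluster_output :: "'a set \<Rightarrow> ('a \<Rightarrow> 'a \<Rightarrow> real) \<Rightarrow> real \<Rightarrow> 'a set \<Rightarrow> bool" where
  "cluster_output U d R U' \<longleftrightarrow> (cluster_step U d R)\<^sup>*\<^sup>* ({}, {}) (U, U')"

end

theory Submission
  imports Defs
begin

lemma cluster_inv:
  assumes "(cluster_step U d R)\<^sup>*\<^sup>* s0 s" "s0 = ({},{})" "\<forall>u\<in>U. d u u = 0" "R > 0"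
  shows "fst s \<subseteq> U \<and> snd s \<subseteq> fst s \<and> (\<forall>v\<in>fst s. \<exists>c\<in>snd s. dmax d c v < R)
     \<and> (\<forall>c\<in>snd s. \<forall>v\<in>U. dmax d c v < R \<longrightarrow> v \<in> fst s)
     \<and> (\<forall>u\<in>snd s. \<forall>v\<in>snd s. u \<noteq> v \<longrightarrow> dmax d u v \<ge> R)"
  using assms(1,2)
proof (induction rule: rtranclp_induct)
  case base
  then show ?case by simp
next
  case (step y z)
  from step.hyps(2) obtain c M S where y: "y = (M, S)" and
    z: "z = (M \<union> {v \<in> U. v \<notin> M \<and> dmax d c v < R}, insert c S)" and c: "c \<in> U" "c \<notin> M"
    by (cases rule: cluster_step.cases) auto
  have IH: "M \<subseteq> U" "S \<subseteq> M" "\<forall>v\<in>M. \<exists>c\<in>S. dmax d c v < R"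
    "\<forall>c\<in>S. \<forall>v\<in>U. dmax d c v < R \<longrightarrow> v \<in> M"
    "\<forall>u\<in>S. \<forall>v\<in>S. u \<noteq> v \<longrightarrow> dmax d u v \<ge> R"
    using step.IH step.prems y by auto
  have cc: "dmax d c c < R" using c assms(3,4) by (simp add: dmax_def)
  have sym: "dmax d u v = dmax d v u" for u v by (simp add: dmax_def max.commute)
  have new: "\<forall>s\<in>S. dmax d s c \<ge> R" using IH(4) c by (meson not_le)
  let ?M = "M \<union> {v \<in> U. v \<notin> M \<and> dmax d c v < R}"
  have g1: "?M \<subseteq> U" using IH(1) by blast
  have g2: "insert c S \<subseteq> ?M" using IH(2) c cc by blast
  have g3: "\<forall>v\<in>?M. \<exists>c'\<in>insert c S. dmax d c' v < R"
  proof
    fix v assume "v \<in> ?M"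
    then show "\<exists>c'\<in>insert c S. dmax d c' v < R"
    proof
      assume "v \<in> M" then show ?thesis using IH(3) by blast
    next
      assume "v \<in> {v \<in> U. v \<notin> M \<and> dmax d c v < R}" then show ?thesis by blast
    qed
  qed
  have g4: "\<forall>c'\<in>insert c S. \<forall>v\<in>U. dmax d c' v < R \<longrightarrow> v \<in> ?M"
    using IH(4) by blast
  have g5: "\<forall>u\<in>insert c S. \<forall>v\<in>insert c S. u \<noteq> v \<longrightarrow> dmax d u v \<ge> R"
  proof (intro ballI impI)
    fix u v assume u: "u \<in> insert c S" and v: "v \<in> insert c S" and "u \<noteq> v"
    show "dmax d u v \<ge> R"
    proof (cases "u = c")
      case True
      then have "v \<in> S" using v \<open>u \<noteq> v\<close> by blast
      then show ?thesis using new sym True by metis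
    next
      case False
      then have uS: "u \<in> S" using u by blast
      show ?thesis
      proof (cases "v = c")
        case True then show ?thesis using new uS by blast
      next
        case False then show ?thesis using IH(5) uS v \<open>u \<noteq> v\<close> by blast
      qed
    qed
  qed
  show ?case unfolding z fst_conv snd_conv using g1 g2 g3 g4 g5 by blast
qed

theorem corollary5p3:
  fixes U :: "'a set" and d :: "'a \<Rightarrow> 'a \<Rightarrow> real" and k :: nat and R :: real and U' :: "'a set"
  assumes "asym_pseudometric U d"
    and "k \<ge> 2" and "k \<le> card U"
    and "opt_div U d k > 0"
    and "R > 0"
    and "cluster_output U d R U'"
  shows "(\<forall>u\<in>U'. \<forall>v\<in>U'. u \<noteq> v \<longrightarrow> dmax d u v \<ge> R) \<and>
         (R \<le> R_prime U d k \<longrightarrow>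
            (\<exists>S \<subseteq> U'. card S = k \<and> divers d S \<ge> R_prime U d k \<and>
                       R_prime U d k \<ge> opt_div U d k / 3))"
proof -
  have fin: "finite U" and nn: "\<forall>u\<in>U. \<forall>v\<in>U. d u v \<ge> 0" and d0: "\<forall>u\<in>U. d u u = 0"
    and tri: "\<forall>u\<in>U. \<forall>v\<in>U. \<forall>w\<in>U. d u v \<le> d u w + d w v"
    using assms(1) unfolding asym_pseudometric_def by auto
  have inv: "U' \<subseteq> U \<and> (\<forall>v\<in>U. \<exists>c\<in>U'. dmax d c v < R)
     \<and> (\<forall>u\<in>U'. \<forall>v\<in>U'. u \<noteq> v \<longrightarrow> dmax d u v \<ge> R)"
    using cluster_inv[OF assms(6)[unfolded cluster_output_def] refl d0 assms(5)] by auto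
  define Rs where "Rs = opt_div U d k"
  define Rp where "Rp = R_prime U d k"
  have finT: "finite {divers d T | T. T \<subseteq> U \<and> card T = k}"
  proof -
    have "{divers d T | T. T \<subseteq> U \<and> card T = k} \<subseteq> divers d ` Pow U" by auto
    then show ?thesis using fin by (meson finite_Pow_iff finite_imageI finite_subset)
  qed
  obtain T0 where T0: "T0 \<subseteq> U" "card T0 = k" using assms(3) by (meson obtain_subset_with_card_n)
  have "Rs \<in> {divers d T | T. T \<subseteq> U \<and> card T = k}"
    unfolding Rs_def opt_div_def using T0 finT by (intro Max_in) auto
  then obtain Opt where Opt: "Opt \<subseteq> U" "card Opt = k" "divers d Opt = Rs" by auto
  have finO: "finite Opt" using Opt(1) fin finite_subset by blast
  have Opair: "d u v \<ge> Rs" if "u \<in> Opt" "v \<in> Opt" "u \<noteq> v" for u v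
  proof -
    have f: "finite {d u v | u v. u \<in> Opt \<and> v \<in> Opt \<and> u \<noteq> v}"
    proof -
      have "{d u v | u v. u \<in> Opt \<and> v \<in> Opt \<and> u \<noteq> v} \<subseteq> (\<lambda>(u,v). d u v) ` (Opt \<times> Opt)" by auto
      then show ?thesis using finO by (meson finite_SigmaI finite_imageI finite_subset)
    qed
    show ?thesis using Opt(3) unfolding divers_def using Min_le[OF f] that by blast
  qed
  have Rs_pos: "Rs > 0" using assms(4) Rs_def by simp
  have finP: "finite {d u v | u v. u \<in> U \<and> v \<in> U \<and> u \<noteq> v \<and> d u v \<ge> Rs / 3}"
  proof -
    have "{d u v | u v. u \<in> U \<and> v \<in> U \<and> u \<noteq> v \<and> d u v \<ge> Rs / 3} \<subseteq> (\<lambda>(u,v). d u v) ` (U \<times> U)" by auto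
    then show ?thesis using fin by (meson finite_SigmaI finite_imageI finite_subset)
  qed
  have Pmin: "Rp \<le> d u v" if "u \<in> U" "v \<in> U" "u \<noteq> v" "d u v \<ge> Rs / 3" for u v
    unfolding Rp_def R_prime_def Rs_def[symmetric] using Min_le[OF finP] that by blast
  obtain o1 o2 where oo: "o1 \<in> Opt" "o2 \<in> Opt" "o1 \<noteq> o2"
  proof -
    have "2 \<le> card Opt" using Opt(2) assms(2) by simp
    then show ?thesis using that by (metis One_nat_def card_le_Suc0_iff_eq finO not_less_eq_eq numeral_2_eq_2)
  qed
  have Rp_ge: "Rp \<ge> Rs / 3"
    unfolding Rp_def R_prime_def Rs_def[symmetric]
  proof (rule Min.boundedI[OF finP])
    show "{d u v | u v. u \<in> U \<and> v \<in> U \<and> u \<noteq> v \<and> d u v \<ge> Rs / 3} \<noteq> {}"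
    proof -
      have "o1 \<in> U" "o2 \<in> U" using oo Opt(1) by auto
      moreover have "d o1 o2 \<ge> Rs / 3" using Opair[OF oo] Rs_pos by simp
      ultimately have "d o1 o2 \<in> {d u v | u v. u \<in> U \<and> v \<in> U \<and> u \<noteq> v \<and> d u v \<ge> Rs / 3}"
        using oo(3) by blast
      then show ?thesis by blast
    qed
  qed auto
  have part2: "\<exists>S \<subseteq> U'. card S = k \<and> divers d S \<ge> Rp" if RR: "R \<le> Rp"
  proof -
    have close: "d c p < Rs / 3 \<and> d p c < Rs / 3" if "c \<in> U" "p \<in> U" "dmax d c p < R" for c p
    proof (cases "c = p")
      case True then show ?thesis using d0 that Rs_pos by simp
    next
      case False
      have "d c p < Rp" "d p c < Rp" using that RR by (auto simp: dmax_def)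
      then show ?thesis using Pmin[of c p] Pmin[of p c] that False by force
    qed
    define f where "f p = (SOME c. c \<in> U' \<and> dmax d c p < R)" for p
    have f: "f p \<in> U' \<and> dmax d (f p) p < R" if "p \<in> U" for p
      unfolding f_def using inv that by (metis (mono_tags, lifting) someI_ex)
    have far: "d (f o1) (f o2) > Rs / 3" if "o1 \<in> Opt" "o2 \<in> Opt" "o1 \<noteq> o2" for o1 o2
    proof -
      have u: "o1 \<in> U" "o2 \<in> U" "f o1 \<in> U" "f o2 \<in> U" using that Opt(1) f inv by auto
      have c1: "d o1 (f o1) < Rs / 3" using close[of "f o1" o1] u f by auto
      have c2: "d (f o2) o2 < Rs / 3" using close[of "f o2" o2] u f by auto
      have "d o1 o2 \<le> d o1 (f o1) + d (f o1) o2" using tri u by blast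
      also have "\<dots> \<le> d o1 (f o1) + (d (f o1) (f o2) + d (f o2) o2)" using tri u by force
      finally show ?thesis using Opair[OF that] c1 c2 by linarith
    qed
    have inj: "inj_on f Opt"
    proof (rule inj_onI, rule ccontr)
      fix x y assume "x \<in> Opt" "y \<in> Opt" "f x = f y" "x \<noteq> y"
      then have "d (f x) (f x) > Rs / 3" using far by metis
      moreover have "f x \<in> U" using f inv \<open>x \<in> Opt\<close> Opt(1) by blast
      ultimately show False using d0 Rs_pos by simp
    qed
    define S where "S = f ` Opt"
    have SU: "S \<subseteq> U'" using f Opt(1) S_def by auto
    have cardS: "card S = k" using card_image[OF inj] Opt(2) S_def by simp
    have finS: "finite {d u v | u v. u \<in> S \<and> v \<in> S \<and> u \<noteq> v}"
    proof -
      have "{d u v | u v. u \<in> S \<and> v \<in> S \<and> u \<noteq> v} \<subseteq> (\<lambda>(u,v). d u v) ` (S \<times> S)" by auto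
      then show ?thesis using finO S_def by (meson finite_SigmaI finite_imageI finite_subset)
    qed
    have "divers d S \<ge> Rp"
      unfolding divers_def
    proof (rule Min.boundedI[OF finS])
      show "{d u v | u v. u \<in> S \<and> v \<in> S \<and> u \<noteq> v} \<noteq> {}"
        using oo inj S_def by (auto dest: inj_onD)
    next
      fix a assume "a \<in> {d u v | u v. u \<in> S \<and> v \<in> S \<and> u \<noteq> v}"
      then obtain x y where xy: "x \<in> Opt" "y \<in> Opt" "f x \<noteq> f y" "a = d (f x) (f y)"
        unfolding S_def by auto
      then have "x \<noteq> y" by auto
      then have "d (f x) (f y) > Rs / 3" using far xy by blast
      moreover have "f x \<in> U" "f y \<in> U" using f inv xy Opt(1) by blast+
      ultimately show "Rp \<le> a" using Pmin xy by force
    qed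
    then show ?thesis using SU cardS by blast
  qed
  show ?thesis using inv part2 Rp_ge unfolding Rp_def Rs_def by blast
qed

end
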